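(* Let $W$ be the set of words over the alphabet $\{c_1,c_2,t_{12}\}$ that arise as the skeleton (word of a compatible listing) of some finite bicoloured graph, and for $w\in W$ let $r_1(w),r_2(w),s(w)$ be the numbers of occurrences of $c_1$, $c_2$, $t_{12}$ in $w$. Then \[\sum_{w\in W}c_1^{r_1(w)}c_2^{r_2(w)}t_{12}^{s(w)}=\left(1-\frac{c_1}{1+c_1}-\frac{c_2}{1+c_2}-t_{12}\right)^{-1}.\]
   Context: A bicoloured graph is a triple $G=(V_1,V_2,E)$ with $V_1,V_2$ disjoint finite sets (an ordered bipartition, either possibly empty) and $E\subseteq V_1\times V_2$. View $G$ as a poset on $V_1\cup V_2$ with $u<w$ iff $u\in V_1$, $w\in V_2$ and $(u,w)\in E$; vertices of $V_1$ have level $1$ and vertices of $V_2$ have level $2$ (even if isolated). For a vertex $a$ let $D_a=\{x:x<a\}$, $U_a=\{x:x>a\}$. Write $a\mathrel{\top}b$ if neither of $D_a,D_b$ contains the other, and $a\mathrel{\bot}b$ if neither of $U_a,U_b$ contains the other. A top of a tangle is a set $A$ with $|A|\ge2$ that is a connected component of the graph with edges $\{a,b\}$ for $a\mathrel{\top}b$; a bottom of a tangle is defined likewise with $\bot$. A top $A$ and bottom $B$ are matched if there are distinct $a_1,a_2\in A$, $b_1,b_2\in B$ with $b_1<a_1$, $b_2<a_2$ and the pairs $\{a_1,a_2\},\{b_1,b_2\},\{b_1,a_2\},\{b_2,a_1\}$ incomparable; a tangle is a matched pair $(A,B)$ (then $A\subseteq V_2$, $B\subseteq V_1$). A clone set is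 a maximal set of vertices lying in no tangle, all in the same colour class and all having the same neighbourhood. The parts of $G$ are its clone sets and tangles. A compatible listing is an ordering $(X_1,\dots,X_m)$ of all parts such that for $a\in X_i\cap V_1$, $b\in X_j\cap V_2$ with $i\neq j$: $a<b$ iff $i<j$. Its word replaces each clone set in $V_1$ by $c_1$, each clone set in $V_2$ by $c_2$, and each tangle by $t_{12}$. *)

theory Defs
  imports "HOL-Analysis.Analysis"
begin

definition bc_less :: "'v set \<Rightarrow> 'v set \<Rightarrow> ('v \<times> 'v) set \<Rightarrow> 'v \<Rightarrow> 'v \<Rightarrow> bool" where
  "bc_less V1 V2 E u w \<longleftrightarrow> u \<in> V1 \<and> w \<in> V2 \<and> (u, w) \<in> E"

definition down_set :: "'v set \<Rightarrow> 'v set \<Rightarrow> ('v \<times> 'v) set \<Rightarrow> 'v \<Rightarrow> 'v set" where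
  "down_set V1 V2 E a = {x \<in> V1 \<union> V2. bc_less V1 V2 E x a}"

definition up_set :: "'v set \<Rightarrow> 'v set \<Rightarrow> ('v \<times> 'v) set \<Rightarrow> 'v \<Rightarrow> 'v set" where
  "up_set V1 V2 E a = {x \<in> V1 \<union> V2. bc_less V1 V2 E a x}"

definition top_rel :: "'v set \<Rightarrow> 'v set \<Rightarrow> ('v \<times> 'v) set \<Rightarrow> 'v \<Rightarrow> 'v \<Rightarrow> bool" where
  "top_rel V1 V2 E a b \<longleftrightarrow>
     \<not> down_set V1 V2 E a \<subseteq> down_set V1 V2 E b \<and> \<not> down_set V1 V2 E b \<subseteq> down_set V1 V2 E a"

definition bot_rel :: "'v set \<Rightarrow> 'v set \<Rightarrow> ('v \<times> 'v) set \<Rightarrow> 'v \<Rightarrow> 'v \<Rightarrow> bool" where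
  "bot_rel V1 V2 E a b \<longleftrightarrow>
     \<not> up_set V1 V2 E a \<subseteq> up_set V1 V2 E b \<and> \<not> up_set V1 V2 E b \<subseteq> up_set V1 V2 E a"

definition component :: "'v set \<Rightarrow> ('v \<Rightarrow> 'v \<Rightarrow> bool) \<Rightarrow> 'v \<Rightarrow> 'v set" where
  "component V R a = {b \<in> V. (a, b) \<in> ({(x, y). x \<in> V \<and> y \<in> V \<and> (R x y \<or> R y x)})\<^sup>*}"

definition is_top :: "'v set \<Rightarrow> 'v set \<Rightarrow> ('v \<times> 'v) set \<Rightarrow> 'v set \<Rightarrow> bool" where
  "is_top V1 V2 E A \<longleftrightarrow> card A \<ge> 2 \<and>
     (\<exists>a \<in> V1 \<union> V2. A = component (V1 \<union> V2) (top_rel V1 V2 E) a)"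

definition is_bottom :: "'v set \<Rightarrow> 'v set \<Rightarrow> ('v \<times> 'v) set \<Rightarrow> 'v set \<Rightarrow> bool" where
  "is_bottom V1 V2 E B \<longleftrightarrow> card B \<ge> 2 \<and>
     (\<exists>a \<in> V1 \<union> V2. B = component (V1 \<union> V2) (bot_rel V1 V2 E) a)"

definition incomparable :: "'v set \<Rightarrow> 'v set \<Rightarrow> ('v \<times> 'v) set \<Rightarrow> 'v \<Rightarrow> 'v \<Rightarrow> bool" where
  "incomparable V1 V2 E x y \<longleftrightarrow> x \<noteq> y \<and> \<not> bc_less V1 V2 E x y \<and> \<not> bc_less V1 V2 E y x"

definition matched :: "'v set \<Rightarrow> 'v set \<Rightarrow> ('v \<times> 'v) set \<Rightarrow> 'v set \<Rightarrow> 'v set \<Rightarrow> bool" where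
  "matched V1 V2 E A B \<longleftrightarrow>
     (\<exists>a1 \<in> A. \<exists>a2 \<in> A. \<exists>b1 \<in> B. \<exists>b2 \<in> B. a1 \<noteq> a2 \<and> b1 \<noteq> b2 \<and>
        bc_less V1 V2 E b1 a1 \<and> bc_less V1 V2 E b2 a2 \<and>
        incomparable V1 V2 E a1 a2 \<and> incomparable V1 V2 E b1 b2 \<and>
        incomparable V1 V2 E b1 a2 \<and> incomparable V1 V2 E b2 a1)"

definition tangles :: "'v set \<Rightarrow> 'v set \<Rightarrow> ('v \<times> 'v) set \<Rightarrow> ('v set \<times> 'v set) set" where
  "tangles V1 V2 E = {(A, B). is_top V1 V2 E A \<and> is_bottom V1 V2 E B \<and> matched V1 V2 E A B}"

definition tangle_vertices :: "'v set \<Rightarrow> 'v set \<Rightarrow> ('v \<times> 'v) set \<Rightarrow> 'v set" where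
  "tangle_vertices V1 V2 E = (\<Union>(A, B) \<in> tangles V1 V2 E. A \<union> B)"

definition nbhd :: "'v set \<Rightarrow> 'v set \<Rightarrow> ('v \<times> 'v) set \<Rightarrow> 'v \<Rightarrow> 'v set" where
  "nbhd V1 V2 E x = {y \<in> V1 \<union> V2. bc_less V1 V2 E x y \<or> bc_less V1 V2 E y x}"

definition clone_like :: "'v set \<Rightarrow> 'v set \<Rightarrow> ('v \<times> 'v) set \<Rightarrow> 'v set \<Rightarrow> bool" where
  "clone_like V1 V2 E X \<longleftrightarrow> X \<subseteq> (V1 \<union> V2) - tangle_vertices V1 V2 E \<and>
     (X \<subseteq> V1 \<or> X \<subseteq> V2) \<and> (\<forall>x \<in> X. \<forall>y \<in> X. nbhd V1 V2 E x = nbhd V1 V2 E y)"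

definition clone_set :: "'v set \<Rightarrow> 'v set \<Rightarrow> ('v \<times> 'v) set \<Rightarrow> 'v set \<Rightarrow> bool" where
  "clone_set V1 V2 E X \<longleftrightarrow> X \<noteq> {} \<and> clone_like V1 V2 E X \<and>
     (\<forall>Y. X \<subseteq> Y \<and> clone_like V1 V2 E Y \<longrightarrow> Y = X)"

datatype 'v part = Clone "'v set" | Tangle "'v set" "'v set"

fun part_verts :: "'v part \<Rightarrow> 'v set" where
  "part_verts (Clone X) = X"
| "part_verts (Tangle A B) = A \<union> B"

definition parts :: "'v set \<Rightarrow> 'v set \<Rightarrow> ('v \<times> 'v) set \<Rightarrow> 'v part set" where
  "parts V1 V2 E = Clone ` {X. clone_set V1 V2 E X} \<union> (\<lambda>(A, B). Tangle A B) ` tangles V1 V2 E"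

definition compatible_listing :: "'v set \<Rightarrow> 'v set \<Rightarrow> ('v \<times> 'v) set \<Rightarrow> 'v part list \<Rightarrow> bool" where
  "compatible_listing V1 V2 E Xs \<longleftrightarrow> distinct Xs \<and> set Xs = parts V1 V2 E \<and>
     (\<forall>i < length Xs. \<forall>j < length Xs. i \<noteq> j \<longrightarrow>
        (\<forall>a \<in> part_verts (Xs ! i) \<inter> V1. \<forall>b \<in> part_verts (Xs ! j) \<inter> V2.
           bc_less V1 V2 E a b \<longleftrightarrow> i < j))"

datatype letter = C1 | C2 | T12

fun part_letter :: "'v set \<Rightarrow> 'v part \<Rightarrow> letter" where
  "part_letter V1 (Clone X) = (if X \<subseteq> V1 then C1 else C2)"
| "part_letter V1 (Tangle A B) = T12"

text \<open>Skeleton words of finite bicoloured graphs (vertices w.l.o.g. natural numbers).\<close>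
definition skeleton_words :: "letter list set" where
  "skeleton_words = {w. \<exists>(V1 :: nat set) V2 E Xs. finite V1 \<and> finite V2 \<and> V1 \<inter> V2 = {} \<and>
      E \<subseteq> V1 \<times> V2 \<and> compatible_listing V1 V2 E Xs \<and> w = map (part_letter V1) Xs}"

end

theory Submission
  imports Defs
begin


fun smir :: "letter list \<Rightarrow> bool" where
  "smir [] = True"
| "smir [x] = True"
| "smir (x # y # ys) = ((x = y \<longrightarrow> x = T12) \<and> smir (y # ys))"

lemma smir_Cons: "smir (x # w) \<longleftrightarrow> smir w \<and> (w \<noteq> [] \<longrightarrow> hd w = x \<longrightarrow> x = T12)"
  by (cases w) auto

definition wt :: "real \<Rightarrow> real \<Rightarrow> real \<Rightarrow> letter list \<Rightarrow> real" where
  "wt a b c w = a ^ count_list w C1 * b ^ count_list w C2 * c ^ count_list w T12"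

definition lw :: "real \<Rightarrow> real \<Rightarrow> real \<Rightarrow> letter \<Rightarrow> real" where
  "lw a b c x = (case x of C1 \<Rightarrow> a | C2 \<Rightarrow> b | T12 \<Rightarrow> c)"

lemma wt_Nil[simp]: "wt a b c [] = 1" by (simp add: wt_def)

lemma wt_Cons: "wt a b c (x # w) = lw a b c x * wt a b c w"
  by (cases x) (simp_all add: wt_def lw_def)

lemma UNIV_letter: "(UNIV :: letter set) = {C1, C2, T12}"
  using letter.exhaust by auto

lemma finite_len: "finite {xs :: letter list. length xs = n}"
proof -
  have "{xs :: letter list. length xs = n} = {xs. set xs \<subseteq> {C1,C2,T12} \<and> length xs = n}"
    using UNIV_letter by auto
  thus ?thesis using finite_lists_length_eq[of "{C1,C2,T12}" n] by simp
qed

lemma sum_len: "(\<Sum>xs\<in>{xs :: letter list. length xs = n}. wt a b c xs) = (a + b + c) ^ n"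
proof (induction n)
  case 0
  have "{xs :: letter list. length xs = 0} = {[]}" by auto
  then show ?case by simp
next
  case (Suc n)
  have eq: "{xs :: letter list. length xs = Suc n} = (\<lambda>(x, ys). x # ys) ` (UNIV \<times> {ys. length ys = n})"
    by (auto simp: length_Suc_conv)
  have inj: "inj_on (\<lambda>(x, ys). x # ys) (UNIV \<times> {ys :: letter list. length ys = n})"
    by (auto simp: inj_on_def)
  have "(\<Sum>xs\<in>{xs :: letter list. length xs = Suc n}. wt a b c xs)
      = (\<Sum>p\<in>UNIV \<times> {ys :: letter list. length ys = n}. lw a b c (fst p) * wt a b c (snd p))"
    unfolding eq by (subst sum.reindex[OF inj]) (auto simp: wt_Cons intro!: sum.cong)
  also have "\<dots> = (\<Sum>x\<in>UNIV. lw a b c x) * (\<Sum>ys\<in>{ys :: letter list. length ys = n}. wt a b c ys)"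
    by (simp add: sum_product sum.cartesian_product case_prod_beta)
  also have "(\<Sum>x\<in>UNIV. lw a b c x) = a + b + c"
    by (simp add: UNIV_letter lw_def)
  finally show ?case using Suc by simp
qed

lemma sum_lenlt: "(\<Sum>xs\<in>{xs :: letter list. length xs < N}. wt a b c xs) = (\<Sum>n<N. (a + b + c) ^ n)"
proof (induction N)
  case 0 then show ?case by simp
next
  case (Suc N)
  have eq: "{xs :: letter list. length xs < Suc N} = {xs. length xs < N} \<union> {xs. length xs = N}" by auto
  have fin: "finite {xs :: letter list. length xs < N}"
  proof -
    have "{xs :: letter list. length xs < N} = (\<Union>n<N. {xs. length xs = n})" by auto
    thus ?thesis using finite_len by simp
  qed
  show ?case unfolding eq
    by (subst sum.union_disjoint) (auto simp: fin finite_len sum_len Suc)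
qed

lemma geo_bound:
  fixes q :: real assumes "0 \<le> q" "q < 1"
  shows "(\<Sum>n<N. q ^ n) \<le> 1 / (1 - q)"
proof -
  have "(\<Sum>n<N. q ^ n) = (1 - q ^ N) / (1 - q)"
    using assms sum_gp_strict[of q N] by simp
  also have "\<dots> \<le> 1 / (1 - q)"
    using assms by (intro divide_right_mono) auto
  finally show ?thesis .
qed

lemma wt_nonneg: "0 \<le> a \<Longrightarrow> 0 \<le> b \<Longrightarrow> 0 \<le> c \<Longrightarrow> 0 \<le> wt a b c w"
  by (simp add: wt_def)

lemma wt_abs: "norm (wt a b c w) = wt \<bar>a\<bar> \<bar>b\<bar> \<bar>c\<bar> w"
  by (simp add: wt_def abs_mult power_abs)

lemma summable_all:
  assumes "\<bar>a\<bar> + \<bar>b\<bar> + \<bar>c\<bar> < 1"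
  shows "wt a b c summable_on A"
proof -
  let ?q = "\<bar>a\<bar> + \<bar>b\<bar> + \<bar>c\<bar>"
  have "wt \<bar>a\<bar> \<bar>b\<bar> \<bar>c\<bar> summable_on UNIV"
  proof (rule nonneg_bdd_above_summable_on)
    show "\<And>x. x \<in> UNIV \<Longrightarrow> 0 \<le> wt \<bar>a\<bar> \<bar>b\<bar> \<bar>c\<bar> x" by (simp add: wt_nonneg)
    show "bdd_above (sum (wt \<bar>a\<bar> \<bar>b\<bar> \<bar>c\<bar>) ` {F. F \<subseteq> UNIV \<and> finite F})"
    proof (rule bdd_aboveI2)
      fix F :: "letter list set" assume "F \<in> {F. F \<subseteq> UNIV \<and> finite F}"
      hence fin: "finite F" by simp
      define N where "N = Suc (Max (insert 0 (length ` F)))"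
      have sub: "F \<subseteq> {xs. length xs < N}"
        using fin by (auto simp: N_def less_Suc_eq_le)
      have finN: "finite {xs :: letter list. length xs < N}"
      proof -
        have "{xs :: letter list. length xs < N} = (\<Union>n<N. {xs. length xs = n})" by auto
        thus ?thesis using finite_len by simp
      qed
      have "sum (wt \<bar>a\<bar> \<bar>b\<bar> \<bar>c\<bar>) F \<le> sum (wt \<bar>a\<bar> \<bar>b\<bar> \<bar>c\<bar>) {xs. length xs < N}"
        by (rule sum_mono2[OF finN sub]) (simp add: wt_nonneg)
      also have "\<dots> = (\<Sum>n<N. ?q ^ n)" by (rule sum_lenlt)
      also have "\<dots> \<le> 1 / (1 - ?q)" using assms by (intro geo_bound) auto
      finally show "sum (wt \<bar>a\<bar> \<bar>b\<bar> \<bar>c\<bar>) F \<le> 1 / (1 - ?q)" .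
    qed
  qed
  moreover have "(\<lambda>x. norm (wt a b c x)) = wt \<bar>a\<bar> \<bar>b\<bar> \<bar>c\<bar>" by (rule ext, rule wt_abs)
  ultimately have "(\<lambda>x. norm (wt a b c x)) summable_on UNIV" by simp
  hence "wt a b c summable_on UNIV" by (rule abs_summable_summable)
  thus ?thesis by (rule summable_on_subset_banach) auto
qed

lemma genfun:
  assumes "\<bar>a\<bar> < 1/4" "\<bar>b\<bar> < 1/4" "\<bar>c\<bar> < 1/4"
  shows "(wt a b c has_sum (1 / (1 - a / (1 + a) - b / (1 + b) - c))) {w. smir w}"
proof -
  let ?f = "wt a b c"
  define S where "S = {w. smir w}"
  define S1 where "S1 = {w \<in> S. w \<noteq> [] \<and> hd w = C1}"
  define S2 where "S2 = {w \<in> S. w \<noteq> [] \<and> hd w = C2}"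
  define St where "St = {w \<in> S. w \<noteq> [] \<and> hd w = T12}"
  have sA: "\<And>A. ?f summable_on A" using assms by (intro summable_all) auto
  define F where "F = infsum ?f S"
  define F1 where "F1 = infsum ?f S1"
  define F2 where "F2 = infsum ?f S2"
  define Ft where "Ft = infsum ?f St"
  have hS: "(?f has_sum F) S" using sA F_def by simp
  have hS1: "(?f has_sum F1) S1" using sA F1_def by simp
  have hS2: "(?f has_sum F2) S2" using sA F2_def by simp
  have hSt: "(?f has_sum Ft) St" using sA Ft_def by simp
  have injC: "\<And>x A. inj_on (Cons x) A" by (auto simp: inj_on_def)
  have key: "\<And>x T x'. x \<noteq> T12 \<Longrightarrow> T = {w \<in> S. w \<noteq> [] \<and> hd w = x} \<Longrightarrow> (?f has_sum x') T \<Longrightarrow>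
      x' = lw a b c x * (F - x')"
  proof -
    fix x T x' assume x: "x \<noteq> T12" and T: "T = {w \<in> S. w \<noteq> [] \<and> hd w = x}" and h: "(?f has_sum x') T"
    have TS: "T \<subseteq> S" using T by auto
    have "T = Cons x ` (S - T)"
    proof
      show "T \<subseteq> Cons x ` (S - T)"
      proof
        fix w assume "w \<in> T"
        then obtain w' where w: "w = x # w'" "smir (x # w')" using T S_def by (cases w) auto
        hence "w' \<in> S - T" using x T S_def by (auto simp: smir_Cons)
        thus "w \<in> Cons x ` (S - T)" using w by auto
      qed
      show "Cons x ` (S - T) \<subseteq> T"
        using T S_def by (auto simp: smir_Cons)
    qed
    hence "(?f has_sum x') (Cons x ` (S - T))" using h by simp
    hence "((?f \<circ> Cons x) has_sum x') (S - T)" by (simp add: has_sum_reindex[OF injC])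
    hence "((\<lambda>w. lw a b c x * ?f w) has_sum x') (S - T)" by (simp add: o_def wt_Cons)
    moreover have "((\<lambda>w. lw a b c x * ?f w) has_sum (lw a b c x * (F - x'))) (S - T)"
      by (intro has_sum_cmult_right has_sum_Diff hS h TS)
    ultimately show "x' = lw a b c x * (F - x')" using has_sum_unique by blast
  qed
  have e1: "F1 = a * (F - F1)" using key[OF _ S1_def hS1] by (simp add: lw_def)
  have e2: "F2 = b * (F - F2)" using key[OF _ S2_def hS2] by (simp add: lw_def)
  have "St = Cons T12 ` S"
  proof
    show "St \<subseteq> Cons T12 ` S"
    proof
      fix w assume "w \<in> St"
      then obtain w' where w: "w = T12 # w'" "smir (T12 # w')" using St_def S_def by (cases w) auto
      thus "w \<in> Cons T12 ` S" using S_def by (auto simp: smir_Cons)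
    qed
    show "Cons T12 ` S \<subseteq> St" using St_def S_def by (auto simp: smir_Cons)
  qed
  hence "((?f \<circ> Cons T12) has_sum Ft) S" using hSt by (simp add: has_sum_reindex[OF injC])
  hence "((\<lambda>w. c * ?f w) has_sum Ft) S" by (simp add: o_def wt_Cons lw_def)
  moreover have "((\<lambda>w. c * ?f w) has_sum (c * F)) S" by (intro has_sum_cmult_right hS)
  ultimately have et: "Ft = c * F" using has_sum_unique by blast
  have Seq: "S = insert [] (S1 \<union> S2 \<union> St)"
  proof -
    have "\<And>w. w \<noteq> [] \<Longrightarrow> hd w = C1 \<or> hd w = C2 \<or> hd w = T12" using letter.exhaust by blast
    thus ?thesis unfolding S1_def S2_def St_def S_def by auto
  qed
  have "(?f has_sum (F1 + F2)) (S1 \<union> S2)"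
    by (rule has_sum_Un_disjoint[OF hS1 hS2]) (auto simp: S1_def S2_def)
  hence "(?f has_sum (F1 + F2 + Ft)) (S1 \<union> S2 \<union> St)"
    by (rule has_sum_Un_disjoint[OF _ hSt]) (auto simp: S1_def S2_def St_def)
  hence "(?f has_sum (?f [] + (F1 + F2 + Ft))) (insert [] (S1 \<union> S2 \<union> St))"
    by (rule has_sum_insert[rotated]) (auto simp: S1_def S2_def St_def)
  hence "(?f has_sum (1 + (F1 + F2 + Ft))) S" using Seq by simp
  hence eF: "F = 1 + F1 + F2 + Ft" using hS has_sum_unique by (metis add.assoc)
  have pa: "1 + a \<noteq> 0" "1 + b \<noteq> 0" using assms by auto
  have f1: "F1 = a * F / (1 + a)" using e1 pa by (simp add: field_simps; simp add: algebra_simps)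
  have f2: "F2 = b * F / (1 + b)" using e2 pa by (simp add: field_simps; simp add: algebra_simps)
  have d: "F * (1 - a / (1 + a) - b / (1 + b) - c) = F - F * (a / (1 + a)) - F * (b / (1 + b)) - F * c"
    by (simp add: algebra_simps)
  have "F * (a / (1 + a)) = F1" "F * (b / (1 + b)) = F2" "F * c = Ft" using f1 f2 et by simp_all
  hence "F * (1 - a / (1 + a) - b / (1 + b) - c) = 1"
    using d eF by linarith
  hence "F = 1 / (1 - a / (1 + a) - b / (1 + b) - c)"
    by (metis divide_eq_eq mult_eq_0_iff zero_neq_one)
  thus ?thesis using hS S_def by simp
qed



lemma smir_nth: "smir w \<longleftrightarrow> (\<forall>i. Suc i < length w \<longrightarrow> w ! i = w ! Suc i \<longrightarrow> w ! i = T12)"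
proof (induction w rule: smir.induct)
  case 1 then show ?case by simp
next
  case (2 x) then show ?case by simp
next
  case (3 x y ys)
  show ?case
  proof
    assume h: "smir (x # y # ys)"
    show "\<forall>i. Suc i < length (x # y # ys) \<longrightarrow> (x # y # ys) ! i = (x # y # ys) ! Suc i \<longrightarrow> (x # y # ys) ! i = T12"
    proof (intro allI impI)
      fix i assume a: "Suc i < length (x # y # ys)" "(x # y # ys) ! i = (x # y # ys) ! Suc i"
      show "(x # y # ys) ! i = T12"
      proof (cases i)
        case 0 then show ?thesis using h a by simp
      next
        case (Suc k) then show ?thesis using h a 3 by simp
      qed
    qed
  next
    assume h: "\<forall>i. Suc i < length (x # y # ys) \<longrightarrow> (x # y # ys) ! i = (x # y # ys) ! Suc i \<longrightarrow> (x # y # ys) ! i = T12"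
    have "x = y \<longrightarrow> x = T12" using h[rule_format, of 0] by simp
    moreover have "smir (y # ys)"
      unfolding 3 proof (intro allI impI)
      fix i assume "Suc i < length (y # ys)" "(y # ys) ! i = (y # ys) ! Suc i"
      thus "(y # ys) ! i = T12" using h[rule_format, of "Suc i"] by simp
    qed
    ultimately show "smir (x # y # ys)" by simp
  qed
qed

lemma clone_in_parts: "Clone X \<in> parts V1 V2 E \<Longrightarrow> clone_set V1 V2 E X"
  by (auto simp: parts_def)

lemma part_in_V: "P \<in> parts V1 V2 E \<Longrightarrow> part_verts P \<subseteq> V1 \<union> V2"
proof -
  assume "P \<in> parts V1 V2 E"
  then consider (c) X where "P = Clone X" "clone_set V1 V2 E X"
    | (t) A B where "P = Tangle A B" "(A, B) \<in> tangles V1 V2 E"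
    by (auto simp: parts_def)
  then show ?thesis
  proof cases
    case c then show ?thesis by (auto simp: clone_set_def clone_like_def)
  next
    case t
    then have "is_top V1 V2 E A" "is_bottom V1 V2 E B" by (auto simp: tangles_def)
    then show ?thesis using t
      by (auto simp: is_top_def is_bottom_def component_def)
  qed
qed

lemma cover:
  assumes fin: "finite V1" "finite V2" and v: "v \<in> V1 \<union> V2"
  shows "\<exists>P\<in>parts V1 V2 E. v \<in> part_verts P"
proof (cases "v \<in> tangle_vertices V1 V2 E")
  case True
  then obtain A B where "(A, B) \<in> tangles V1 V2 E" "v \<in> A \<union> B"
    by (auto simp: tangle_vertices_def)
  then show ?thesis by (intro bexI[of _ "Tangle A B"]) (auto simp: parts_def)
next
  case False
  define C where "C = {Y. v \<in> Y \<and> clone_like V1 V2 E Y}"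
  have "C \<subseteq> Pow (V1 \<union> V2)" by (auto simp: C_def clone_like_def)
  hence finC: "finite C" using fin by (metis finite_Pow_iff finite_Un finite_subset)
  have "{v} \<in> C" using False v by (auto simp: C_def clone_like_def)
  hence "C \<noteq> {}" by auto
  then obtain m where m: "m \<in> C" "\<forall>b\<in>C. m \<le> b \<longrightarrow> m = b"
    using finite_has_maximal[OF finC] by blast
  have "clone_set V1 V2 E m"
    unfolding clone_set_def using m by (auto simp: C_def)
  then show ?thesis using m by (intro bexI[of _ "Clone m"]) (auto simp: parts_def C_def)
qed

lemma skel_smir:
  assumes "w \<in> skeleton_words"
  shows "smir w"
proof -
  obtain V1 V2 E Xs where fin: "finite (V1 :: nat set)" "finite V2" and disj: "V1 \<inter> V2 = {}"
    and cl: "compatible_listing V1 V2 E Xs" and w: "w = map (part_letter V1) Xs"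
    using assms unfolding skeleton_words_def by blast
  have dist: "distinct Xs" and setX: "set Xs = parts V1 V2 E"
    and comp: "\<And>i j a b. i < length Xs \<Longrightarrow> j < length Xs \<Longrightarrow> i \<noteq> j \<Longrightarrow>
        a \<in> part_verts (Xs ! i) \<inter> V1 \<Longrightarrow> b \<in> part_verts (Xs ! j) \<inter> V2 \<Longrightarrow>
        bc_less V1 V2 E a b \<longleftrightarrow> i < j"
    using cl unfolding compatible_listing_def by blast+
  have cov: "\<And>z. z \<in> V1 \<union> V2 \<Longrightarrow> \<exists>j<length Xs. z \<in> part_verts (Xs ! j)"
  proof -
    fix z assume "z \<in> V1 \<union> V2"
    then obtain P where "P \<in> parts V1 V2 E" "z \<in> part_verts P" using cover[OF fin] by blast
    then show "\<exists>j<length Xs. z \<in> part_verts (Xs ! j)" using setX by (metis in_set_conv_nth)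
  qed
  have clone_at: "\<And>i. i < length Xs \<Longrightarrow> part_letter V1 (Xs ! i) \<noteq> T12 \<Longrightarrow>
      \<exists>X. Xs ! i = Clone X \<and> clone_set V1 V2 E X \<and> (part_letter V1 (Xs ! i) = C1 \<longrightarrow> X \<subseteq> V1)
        \<and> (part_letter V1 (Xs ! i) = C2 \<longrightarrow> X \<subseteq> V2)"
  proof -
    fix i assume i: "i < length Xs" "part_letter V1 (Xs ! i) \<noteq> T12"
    then obtain X where X: "Xs ! i = Clone X" by (cases "Xs ! i") auto
    have "Clone X \<in> parts V1 V2 E" using X i setX by (metis nth_mem)
    hence cs: "clone_set V1 V2 E X" by (rule clone_in_parts)
    hence "X \<subseteq> V1 \<or> X \<subseteq> V2" by (auto simp: clone_set_def clone_like_def)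
    thus "\<exists>X. Xs ! i = Clone X \<and> clone_set V1 V2 E X \<and> (part_letter V1 (Xs ! i) = C1 \<longrightarrow> X \<subseteq> V1)
        \<and> (part_letter V1 (Xs ! i) = C2 \<longrightarrow> X \<subseteq> V2)"
      using X cs by auto
  qed
  show ?thesis unfolding smir_nth
  proof (intro allI impI, rule ccontr)
    fix i assume i: "Suc i < length w" and eq: "w ! i = w ! Suc i" and nt: "w ! i \<noteq> T12"
    have li: "i < length Xs" "Suc i < length Xs" using i w by auto
    have le: "part_letter V1 (Xs ! i) = part_letter V1 (Xs ! Suc i)" "part_letter V1 (Xs ! i) \<noteq> T12"
      using eq nt li w by auto
    obtain X where X: "Xs ! i = Clone X" "clone_set V1 V2 E X"
      "part_letter V1 (Xs ! i) = C1 \<longrightarrow> X \<subseteq> V1" "part_letter V1 (Xs ! i) = C2 \<longrightarrow> X \<subseteq> V2"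
      using clone_at[OF li(1) le(2)] by blast
    obtain Y where Y: "Xs ! Suc i = Clone Y" "clone_set V1 V2 E Y"
      "part_letter V1 (Xs ! i) = C1 \<longrightarrow> Y \<subseteq> V1" "part_letter V1 (Xs ! i) = C2 \<longrightarrow> Y \<subseteq> V2"
      using clone_at[OF li(2)] le by auto
    have mono: "(X \<subseteq> V1 \<and> Y \<subseteq> V1) \<or> (X \<subseteq> V2 \<and> Y \<subseteq> V2)"
      using X(3,4) Y(3,4) le(2) by (cases "part_letter V1 (Xs ! i)") simp_all
    have XY: "X \<noteq> Y"
    proof
      assume "X = Y"
      hence "Xs ! i = Xs ! Suc i" using X(1) Y(1) by simp
      thus False using dist li by (simp add: nth_eq_iff_index_eq)
    qed
    have nb: "nbhd V1 V2 E x = nbhd V1 V2 E y" if x: "x \<in> X" and y: "y \<in> Y" for x y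
    proof -
      have "(bc_less V1 V2 E x z \<or> bc_less V1 V2 E z x) \<longleftrightarrow> (bc_less V1 V2 E y z \<or> bc_less V1 V2 E z y)"
        if z: "z \<in> V1 \<union> V2" for z
      proof -
        obtain j where j: "j < length Xs" "z \<in> part_verts (Xs ! j)" using cov[OF z] by blast
        show ?thesis using mono
        proof
          assume m: "X \<subseteq> V1 \<and> Y \<subseteq> V1"
          have xv: "x \<in> V1" "y \<in> V1" "x \<notin> V2" "y \<notin> V2" using m x y disj by auto
          show ?thesis
          proof (cases "z \<in> V2")
            case False thus ?thesis using xv by (auto simp: bc_less_def)
          next
            case True
            have "j \<noteq> i" using True j X m disj by auto
            moreover have "j \<noteq> Suc i" using True j Y m disj by auto
            moreover have "bc_less V1 V2 E x z \<longleftrightarrow> i < j"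
              using comp[OF li(1) j(1)] \<open>j \<noteq> i\<close> X x xv True j by auto
            moreover have "bc_less V1 V2 E y z \<longleftrightarrow> Suc i < j"
              using comp[OF li(2) j(1)] \<open>j \<noteq> Suc i\<close> Y y xv True j by auto
            ultimately show ?thesis using xv by (auto simp: bc_less_def)
          qed
        next
          assume m: "X \<subseteq> V2 \<and> Y \<subseteq> V2"
          have xv: "x \<in> V2" "y \<in> V2" "x \<notin> V1" "y \<notin> V1" using m x y disj by auto
          show ?thesis
          proof (cases "z \<in> V1")
            case False thus ?thesis using xv by (auto simp: bc_less_def)
          next
            case True
            have "j \<noteq> i" using True j X m disj by auto
            moreover have "j \<noteq> Suc i" using True j Y m disj by auto
            moreover have "bc_less V1 V2 E z x \<longleftrightarrow> j < i"
              using comp[OF j(1) li(1)] \<open>j \<noteq> i\<close> X x xv True j by auto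
            moreover have "bc_less V1 V2 E z y \<longleftrightarrow> j < Suc i"
              using comp[OF j(1) li(2)] \<open>j \<noteq> Suc i\<close> Y y xv True j by auto
            ultimately show ?thesis using xv by (auto simp: bc_less_def)
          qed
        qed
      qed
      thus ?thesis by (auto simp: nbhd_def)
    qed
    have "clone_like V1 V2 E (X \<union> Y)"
    proof -
      have cX: "clone_like V1 V2 E X" and cY: "clone_like V1 V2 E Y"
        using X(2) Y(2) by (simp_all add: clone_set_def)
      show ?thesis unfolding clone_like_def
      proof (intro conjI ballI)
        have "X \<subseteq> V1 \<union> V2 - tangle_vertices V1 V2 E" "Y \<subseteq> V1 \<union> V2 - tangle_vertices V1 V2 E"
          using cX cY by (simp_all add: clone_like_def)
        then show "X \<union> Y \<subseteq> V1 \<union> V2 - tangle_vertices V1 V2 E" by blast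
        show "X \<union> Y \<subseteq> V1 \<or> X \<union> Y \<subseteq> V2" using mono by blast
        fix x y assume "x \<in> X \<union> Y" "y \<in> X \<union> Y"
        have cX': "\<forall>a\<in>X. \<forall>b\<in>X. nbhd V1 V2 E a = nbhd V1 V2 E b" using cX unfolding clone_like_def by blast
        have cY': "\<forall>a\<in>Y. \<forall>b\<in>Y. nbhd V1 V2 E a = nbhd V1 V2 E b" using cY unfolding clone_like_def by blast
        from \<open>x \<in> X \<union> Y\<close> \<open>y \<in> X \<union> Y\<close> show "nbhd V1 V2 E x = nbhd V1 V2 E y"
        proof (elim UnE)
          assume "x \<in> X" "y \<in> X" thus ?thesis using cX' by blast
        next
          assume "x \<in> X" "y \<in> Y" thus ?thesis using nb by blast
        next
          assume "x \<in> Y" "y \<in> X" thus ?thesis using nb by metis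
        next
          assume "x \<in> Y" "y \<in> Y" thus ?thesis using cY' by blast
        qed
      qed
    qed
    moreover have "\<forall>Z. X \<subseteq> Z \<and> clone_like V1 V2 E Z \<longrightarrow> Z = X" "\<forall>Z. Y \<subseteq> Z \<and> clone_like V1 V2 E Z \<longrightarrow> Z = Y"
      using X(2) Y(2) unfolding clone_set_def by simp_all
    ultimately have "X \<union> Y = X" "X \<union> Y = Y" by simp_all
    thus False using XY by simp
  qed
qed



lemma ar1: "(x::nat) mod 4 < 2 \<Longrightarrow> (x + 2) div 4 = x div 4" by presburger
lemma ar_md: "(v::nat) mod 4 = 0 \<or> v mod 4 = 1 \<or> v mod 4 = 2 \<or> v mod 4 = 3" by presburger
lemma ar_rec: "v = 4 * ((v::nat) div 4) + v mod 4" by presburger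

lemma dm4[simp]: "Suc (Suc (4*i)) div 4 = i" "Suc (Suc (4*i)) mod 4 = 2"
  "Suc (Suc (Suc (4*i))) div 4 = i" "Suc (Suc (Suc (4*i))) mod 4 = 3"
  "Suc (4*i) div 4 = i" "Suc (4*i) mod 4 = 1"
  "(4*i+2) div 4 = i" "(4*i+2) mod 4 = 2" "(4*i+3) div 4 = i" "(4*i+3) mod 4 = 3"
  "(4*i+1) div 4 = i" "(4*i+1) mod 4 = 1" "(4*i) div 4 = i" "(4*i) mod 4 = 0"
  for i :: nat by presburger+

lemma smir_adj: "smir w \<Longrightarrow> Suc i < length w \<Longrightarrow> w ! i = w ! Suc i \<Longrightarrow> w ! i = T12"
proof (induction w arbitrary: i rule: smir.induct)
  case (3 x y ys) then show ?case by (cases i) auto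
qed auto

locale gr =
  fixes w :: "letter list"
  assumes sm: "smir w"
begin

definition V1 :: "nat set" where
  "V1 = {v. v div 4 < length w \<and> ((v mod 4 = 0 \<and> w ! (v div 4) \<noteq> C2) \<or> (v mod 4 = 1 \<and> w ! (v div 4) = T12))}"
definition V2 :: "nat set" where
  "V2 = {v. v div 4 < length w \<and> ((v mod 4 = 2 \<and> w ! (v div 4) \<noteq> C1) \<or> (v mod 4 = 3 \<and> w ! (v div 4) = T12))}"
definition E :: "(nat \<times> nat) set" where
  "E = {(u, v). u \<in> V1 \<and> v \<in> V2 \<and> (u div 4 < v div 4 \<or> v = u + 2)}"

definition GP :: "nat \<Rightarrow> nat part" where
  "GP i = (case w ! i of C1 \<Rightarrow> Clone {4*i} | C2 \<Rightarrow> Clone {4*i+2} | T12 \<Rightarrow> Tangle {4*i+2, 4*i+3} {4*i, 4*i+1})"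

definition Xs :: "nat part list" where
  "Xs = map GP [0..<length w]"

abbreviation "lt \<equiv> bc_less V1 V2 E"

lemma lt_iff: "lt u v \<longleftrightarrow> u \<in> V1 \<and> v \<in> V2 \<and> (u div 4 < v div 4 \<or> v = u + 2)"
  unfolding bc_less_def E_def by blast

lemma V1_md: "u \<in> V1 \<Longrightarrow> u mod 4 < 2" by (auto simp: V1_def)
lemma V2_md: "u \<in> V2 \<Longrightarrow> u mod 4 \<ge> 2" by (auto simp: V2_def)
lemma V12: "u \<in> V1 \<Longrightarrow> u \<notin> V2" using V1_md V2_md by fastforce

lemma lt_le: "lt u v \<Longrightarrow> u div 4 \<le> v div 4"
  using ar1[of u] V1_md[of u] by (auto simp: lt_iff)

lemma lt_eq: "lt u v \<Longrightarrow> u div 4 = v div 4 \<Longrightarrow> v = u + 2"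
  by (auto simp: lt_iff)

lemma V1_nonT: "v \<in> V1 \<Longrightarrow> w ! (v div 4) \<noteq> T12 \<Longrightarrow> w ! (v div 4) = C1 \<and> v mod 4 = 0"
  by (cases "w ! (v div 4)") (auto simp: V1_def)
lemma V2_nonT: "v \<in> V2 \<Longrightarrow> w ! (v div 4) \<noteq> T12 \<Longrightarrow> w ! (v div 4) = C2 \<and> v mod 4 = 2"
  by (cases "w ! (v div 4)") (auto simp: V2_def)

lemma V2_blk: "v \<in> V2 \<Longrightarrow> v \<in> {4 * (v div 4) + 2, 4 * (v div 4) + 3}"
proof -
  assume "v \<in> V2"
  hence "v mod 4 = 2 \<or> v mod 4 = 3" by (auto simp: V2_def)
  hence "v = 4 * (v div 4) + 2 \<or> v = 4 * (v div 4) + 3" by presburger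
  thus ?thesis by blast
qed
lemma V1_blk: "v \<in> V1 \<Longrightarrow> v \<in> {4 * (v div 4), 4 * (v div 4) + 1}"
proof -
  assume "v \<in> V1"
  hence "v mod 4 = 0 \<or> v mod 4 = 1" by (auto simp: V1_def)
  hence "v = 4 * (v div 4) \<or> v = 4 * (v div 4) + 1" by presburger
  thus ?thesis by blast
qed
lemma V_len: "v \<in> V1 \<union> V2 \<Longrightarrow> v div 4 < length w"
  by (auto simp: V1_def V2_def)

lemma down_ne: "down_set V1 V2 E a \<noteq> {} \<Longrightarrow> a \<in> V2"
  by (auto simp: down_set_def lt_iff)
lemma up_ne: "up_set V1 V2 E a \<noteq> {} \<Longrightarrow> a \<in> V1"
  by (auto simp: up_set_def lt_iff)

lemma down_mono: "a \<in> V2 \<Longrightarrow> b \<in> V2 \<Longrightarrow> a div 4 < b div 4 \<Longrightarrow> down_set V1 V2 E a \<subseteq> down_set V1 V2 E b"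
proof
  fix x assume ab: "a \<in> V2" "b \<in> V2" "a div 4 < b div 4" and x: "x \<in> down_set V1 V2 E a"
  hence lx: "lt x a" "x \<in> V1 \<union> V2" by (auto simp: down_set_def)
  have "x div 4 \<le> a div 4" using lt_le[OF lx(1)] .
  hence "lt x b" using lx ab by (auto simp: lt_iff)
  thus "x \<in> down_set V1 V2 E b" using lx by (auto simp: down_set_def)
qed

lemma up_mono: "a \<in> V1 \<Longrightarrow> b \<in> V1 \<Longrightarrow> a div 4 < b div 4 \<Longrightarrow> up_set V1 V2 E b \<subseteq> up_set V1 V2 E a"
proof
  fix x assume ab: "a \<in> V1" "b \<in> V1" "a div 4 < b div 4" and x: "x \<in> up_set V1 V2 E b"
  hence lx: "lt b x" "x \<in> V1 \<union> V2" by (auto simp: up_set_def)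
  have "b div 4 \<le> x div 4" using lt_le[OF lx(1)] .
  hence "lt a x" using lx ab by (auto simp: lt_iff)
  thus "x \<in> up_set V1 V2 E a" using lx by (auto simp: up_set_def)
qed

lemma top_rel_D:
  assumes "top_rel V1 V2 E a b"
  shows "a \<in> V2 \<and> b \<in> V2 \<and> a div 4 = b div 4 \<and> a \<noteq> b"
proof -
  have "down_set V1 V2 E a \<noteq> {}" "down_set V1 V2 E b \<noteq> {}" using assms by (auto simp: top_rel_def)
  hence ab: "a \<in> V2" "b \<in> V2" using down_ne by auto
  have "\<not> a div 4 < b div 4" using down_mono[OF ab] assms by (auto simp: top_rel_def)
  moreover have "\<not> b div 4 < a div 4" using down_mono[OF ab(2,1)] assms by (auto simp: top_rel_def)
  moreover have "a \<noteq> b" using assms by (auto simp: top_rel_def)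
  ultimately show ?thesis using ab by simp
qed

lemma bot_rel_D:
  assumes "bot_rel V1 V2 E a b"
  shows "a \<in> V1 \<and> b \<in> V1 \<and> a div 4 = b div 4 \<and> a \<noteq> b"
proof -
  have "up_set V1 V2 E a \<noteq> {}" "up_set V1 V2 E b \<noteq> {}" using assms by (auto simp: bot_rel_def)
  hence ab: "a \<in> V1" "b \<in> V1" using up_ne by auto
  have "\<not> a div 4 < b div 4" using up_mono[OF ab] assms by (auto simp: bot_rel_def)
  moreover have "\<not> b div 4 < a div 4" using up_mono[OF ab(2,1)] assms by (auto simp: bot_rel_def)
  moreover have "a \<noteq> b" using assms by (auto simp: bot_rel_def)
  ultimately show ?thesis using ab by simp
qed

lemma comp_D:
  assumes "(a, b) \<in> {(x, y). x \<in> V1 \<union> V2 \<and> y \<in> V1 \<union> V2 \<and> (R x y \<or> R y x)}\<^sup>*"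
    and "\<And>x y. R x y \<Longrightarrow> x \<in> S \<and> y \<in> S \<and> (x :: nat) div 4 = y div 4"
  shows "a = b \<or> (a \<in> S \<and> b \<in> S \<and> a div 4 = b div 4)"
  using assms(1)
proof (induction rule: rtrancl_induct)
  case base then show ?case by simp
next
  case (step y z)
  then have "y \<in> S \<and> z \<in> S \<and> y div 4 = z div 4" using assms(2) by auto
  then show ?case using step by auto
qed

definition TT :: "nat \<Rightarrow> nat set" where "TT i = {4*i+2, 4*i+3}"
definition BB :: "nat \<Rightarrow> nat set" where "BB i = {4*i, 4*i+1}"

lemma card2: "card (TT i) = 2" "card (BB i) = 2" by (auto simp: TT_def BB_def)

lemma TT_in: "i < length w \<Longrightarrow> w ! i = T12 \<Longrightarrow> TT i \<subseteq> V2"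
  by (auto simp: TT_def V2_def)
lemma BB_in: "i < length w \<Longrightarrow> w ! i = T12 \<Longrightarrow> BB i \<subseteq> V1"
  by (auto simp: BB_def V1_def)

lemma is_top_D:
  assumes "is_top V1 V2 E A"
  shows "\<exists>i < length w. w ! i = T12 \<and> A = TT i"
proof -
  obtain a where a: "a \<in> V1 \<union> V2" "A = component (V1 \<union> V2) (top_rel V1 V2 E) a" and c: "card A \<ge> 2"
    using assms by (auto simp: is_top_def)
  have sub: "A \<subseteq> {b. a = b \<or> (a \<in> V2 \<and> b \<in> V2 \<and> a div 4 = b div 4)}"
    using a comp_D[of a _ "top_rel V1 V2 E" V2] top_rel_D by (auto simp: component_def)
  have "\<exists>b\<in>A. b \<noteq> a"
  proof (rule ccontr)
    assume "\<not> ?thesis"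
    hence "A \<subseteq> {a}" by auto
    hence "card A \<le> 1" using card_mono[of "{a}" A] by simp
    thus False using c by simp
  qed
  then obtain b where b: "b \<in> A" "b \<noteq> a" by blast
  hence ab: "a \<in> V2" "b \<in> V2" "a div 4 = b div 4" using sub by auto
  define i where "i = a div 4"
  have il: "i < length w" using ab V_len i_def by auto
  have T: "w ! i = T12"
  proof (rule ccontr)
    assume "w ! i \<noteq> T12"
    hence "a mod 4 = 2" "b mod 4 = 2" using V2_nonT ab i_def by auto
    hence "a = b" using ab ar_rec[of a] ar_rec[of b] by metis
    thus False using b by simp
  qed
  have "A \<subseteq> TT i"
  proof
    fix x assume "x \<in> A"
    hence "x = a \<or> (x \<in> V2 \<and> x div 4 = i)" using sub i_def by auto
    thus "x \<in> TT i" using V2_blk[of x] V2_blk[of a] ab unfolding TT_def i_def by auto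
  qed
  moreover have "card A = card (TT i)" using c card_mono[OF _ \<open>A \<subseteq> TT i\<close>] card2 by (simp add: TT_def)
  ultimately have "A = TT i" by (intro card_subset_eq) (auto simp: TT_def)
  thus ?thesis using il T by blast
qed

lemma is_bottom_D:
  assumes "is_bottom V1 V2 E A"
  shows "\<exists>i < length w. w ! i = T12 \<and> A = BB i"
proof -
  obtain a where a: "a \<in> V1 \<union> V2" "A = component (V1 \<union> V2) (bot_rel V1 V2 E) a" and c: "card A \<ge> 2"
    using assms by (auto simp: is_bottom_def)
  have sub: "A \<subseteq> {b. a = b \<or> (a \<in> V1 \<and> b \<in> V1 \<and> a div 4 = b div 4)}"
    using a comp_D[of a _ "bot_rel V1 V2 E" V1] bot_rel_D by (auto simp: component_def)
  have "\<exists>b\<in>A. b \<noteq> a"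
  proof (rule ccontr)
    assume "\<not> ?thesis"
    hence "A \<subseteq> {a}" by auto
    hence "card A \<le> 1" using card_mono[of "{a}" A] by simp
    thus False using c by simp
  qed
  then obtain b where b: "b \<in> A" "b \<noteq> a" by blast
  hence ab: "a \<in> V1" "b \<in> V1" "a div 4 = b div 4" using sub by auto
  define i where "i = a div 4"
  have il: "i < length w" using ab V_len i_def by auto
  have T: "w ! i = T12"
  proof (rule ccontr)
    assume "w ! i \<noteq> T12"
    hence "a mod 4 = 0" "b mod 4 = 0" using V1_nonT ab i_def by auto
    hence "a = b" using ab ar_rec[of a] ar_rec[of b] by metis
    thus False using b by simp
  qed
  have "A \<subseteq> BB i"
  proof
    fix x assume "x \<in> A"
    hence "x = a \<or> (x \<in> V1 \<and> x div 4 = i)" using sub i_def by auto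
    thus "x \<in> BB i" using V1_blk[of x] V1_blk[of a] ab unfolding BB_def i_def by auto
  qed
  moreover have "card A = card (BB i)" using c card_mono[OF _ \<open>A \<subseteq> BB i\<close>] card2 by (simp add: BB_def)
  ultimately have "A = BB i" by (intro card_subset_eq) (auto simp: BB_def)
  thus ?thesis using il T by blast
qed

lemma top_rel_T: "i < length w \<Longrightarrow> w ! i = T12 \<Longrightarrow> top_rel V1 V2 E (4*i+2) (4*i+3)"
proof -
  assume i: "i < length w" "w ! i = T12"
  have "4*i \<in> down_set V1 V2 E (4*i+2)" "4*i \<notin> down_set V1 V2 E (4*i+3)"
    "4*i+1 \<in> down_set V1 V2 E (4*i+3)" "4*i+1 \<notin> down_set V1 V2 E (4*i+2)"
    using i BB_in[OF i] TT_in[OF i] by (auto simp: down_set_def lt_iff BB_def TT_def)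
  thus ?thesis unfolding top_rel_def by blast
qed

lemma bot_rel_T: "i < length w \<Longrightarrow> w ! i = T12 \<Longrightarrow> bot_rel V1 V2 E (4*i) (4*i+1)"
proof -
  assume i: "i < length w" "w ! i = T12"
  have "4*i+2 \<in> up_set V1 V2 E (4*i)" "4*i+2 \<notin> up_set V1 V2 E (4*i+1)"
    "4*i+3 \<in> up_set V1 V2 E (4*i+1)" "4*i+3 \<notin> up_set V1 V2 E (4*i)"
    using i BB_in[OF i] TT_in[OF i] by (auto simp: up_set_def lt_iff BB_def TT_def)
  thus ?thesis unfolding bot_rel_def by blast
qed

lemma is_top_T: "i < length w \<Longrightarrow> w ! i = T12 \<Longrightarrow> is_top V1 V2 E (TT i)"
proof -
  assume i: "i < length w" "w ! i = T12"
  let ?a = "4*i+2"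
  have aV: "?a \<in> V2" "4*i+3 \<in> V2" using TT_in[OF i] by (auto simp: TT_def)
  have "component (V1 \<union> V2) (top_rel V1 V2 E) ?a = TT i"
  proof
    show "component (V1 \<union> V2) (top_rel V1 V2 E) ?a \<subseteq> TT i"
    proof
      fix x assume "x \<in> component (V1 \<union> V2) (top_rel V1 V2 E) ?a"
      hence "x = ?a \<or> (x \<in> V2 \<and> x div 4 = i)"
        using comp_D[of ?a x "top_rel V1 V2 E" V2] top_rel_D by (auto simp: component_def)
      thus "x \<in> TT i" using V2_blk[of x] by (auto simp: TT_def)
    qed
    show "TT i \<subseteq> component (V1 \<union> V2) (top_rel V1 V2 E) ?a"
      using top_rel_T[OF i] aV by (auto simp: TT_def component_def intro!: r_into_rtrancl)
  qed
  thus ?thesis using aV card2 by (auto simp: is_top_def intro!: bexI[of _ ?a])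
qed

lemma is_bottom_T: "i < length w \<Longrightarrow> w ! i = T12 \<Longrightarrow> is_bottom V1 V2 E (BB i)"
proof -
  assume i: "i < length w" "w ! i = T12"
  let ?a = "4*i"
  have aV: "?a \<in> V1" "4*i+1 \<in> V1" using BB_in[OF i] by (auto simp: BB_def)
  have "component (V1 \<union> V2) (bot_rel V1 V2 E) ?a = BB i"
  proof
    show "component (V1 \<union> V2) (bot_rel V1 V2 E) ?a \<subseteq> BB i"
    proof
      fix x assume "x \<in> component (V1 \<union> V2) (bot_rel V1 V2 E) ?a"
      hence "x = ?a \<or> (x \<in> V1 \<and> x div 4 = i)"
        using comp_D[of ?a x "bot_rel V1 V2 E" V1] bot_rel_D by (auto simp: component_def)
      thus "x \<in> BB i" using V1_blk[of x] by (auto simp: BB_def)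
    qed
    show "BB i \<subseteq> component (V1 \<union> V2) (bot_rel V1 V2 E) ?a"
      using bot_rel_T[OF i] aV by (auto simp: BB_def component_def intro!: r_into_rtrancl)
  qed
  thus ?thesis using aV card2 by (auto simp: is_bottom_def intro!: bexI[of _ ?a])
qed

lemma tangles_eq: "tangles V1 V2 E = {(TT i, BB i) | i. i < length w \<and> w ! i = T12}"
proof
  show "tangles V1 V2 E \<subseteq> {(TT i, BB i) | i. i < length w \<and> w ! i = T12}"
  proof
    fix p assume "p \<in> tangles V1 V2 E"
    then obtain A B where p: "p = (A, B)" "is_top V1 V2 E A" "is_bottom V1 V2 E B" "matched V1 V2 E A B"
      by (auto simp: tangles_def)
    obtain i where i: "i < length w" "w ! i = T12" "A = TT i" using is_top_D[OF p(2)] by blast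
    obtain k where k: "k < length w" "w ! k = T12" "B = BB k" using is_bottom_D[OF p(3)] by blast
    obtain a1 a2 b1 where m: "a1 \<in> A" "a2 \<in> A" "b1 \<in> B" "lt b1 a1" "incomparable V1 V2 E b1 a2"
      using p(4) unfolding matched_def by blast
    have "b1 div 4 = k" "a1 div 4 = i" "a2 div 4 = i" using m i k by (auto simp: TT_def BB_def)
    moreover have "b1 \<in> V1" "a2 \<in> V2" using m i k BB_in TT_in by auto
    ultimately have "k \<le> i" "\<not> k < i" using lt_le[OF m(4)] m(5) by (auto simp: incomparable_def lt_iff)
    hence "k = i" by simp
    thus "p \<in> {(TT i, BB i) | i. i < length w \<and> w ! i = T12}" using p i k by auto
  qed
  show "{(TT i, BB i) | i. i < length w \<and> w ! i = T12} \<subseteq> tangles V1 V2 E"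
  proof
    fix p assume "p \<in> {(TT i, BB i) | i. i < length w \<and> w ! i = T12}"
    then obtain i where i: "i < length w" "w ! i = T12" "p = (TT i, BB i)" by blast
    have "matched V1 V2 E (TT i) (BB i)"
      unfolding matched_def
      apply (rule bexI[of _ "4*i+2"], rule bexI[of _ "4*i+3"], rule bexI[of _ "4*i"], rule bexI[of _ "4*i+1"])
      using i BB_in[OF i(1,2)] TT_in[OF i(1,2)] V12 by (auto simp: TT_def BB_def incomparable_def lt_iff)
    thus "p \<in> tangles V1 V2 E" using i is_top_T is_bottom_T by (auto simp: tangles_def)
  qed
qed

lemma TV_iff: "v \<in> V1 \<union> V2 \<Longrightarrow> v \<in> tangle_vertices V1 V2 E \<longleftrightarrow> w ! (v div 4) = T12"
proof
  assume v: "v \<in> V1 \<union> V2" "v \<in> tangle_vertices V1 V2 E"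
  then obtain i where "i < length w" "w ! i = T12" "v \<in> TT i \<union> BB i"
    by (auto simp: tangle_vertices_def tangles_eq)
  thus "w ! (v div 4) = T12" by (auto simp: TT_def BB_def)
next
  assume v: "v \<in> V1 \<union> V2" "w ! (v div 4) = T12"
  have "v \<in> TT (v div 4) \<union> BB (v div 4)" using v V1_blk V2_blk by (auto simp: TT_def BB_def)
  thus "v \<in> tangle_vertices V1 V2 E" using v V_len by (auto simp: tangle_vertices_def tangles_eq)
qed

lemma nb_V1: "x \<in> V1 \<Longrightarrow> y \<in> V1 \<Longrightarrow> w ! (x div 4) \<noteq> T12 \<Longrightarrow> w ! (y div 4) \<noteq> T12 \<Longrightarrow>
    x div 4 < y div 4 \<Longrightarrow> nbhd V1 V2 E x \<noteq> nbhd V1 V2 E y"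
proof -
  assume a: "x \<in> V1" "y \<in> V1" "w ! (x div 4) \<noteq> T12" "w ! (y div 4) \<noteq> T12" "x div 4 < y div 4"
  define i where "i = x div 4"
  have c1: "w ! i = C1" "w ! (y div 4) = C1" using V1_nonT a i_def by auto
  have yl: "y div 4 < length w" using a V_len by auto
  have n: "w ! Suc i \<noteq> C1"
  proof
    assume "w ! Suc i = C1"
    hence "w ! i = T12" using smir_adj[OF sm, of i] c1 a(5) yl i_def by simp
    thus False using c1 by simp
  qed
  define z where "z = 4 * Suc i + 2"
  have zd: "z div 4 = Suc i" "z mod 4 = 2" by (simp_all add: z_def)
  have zV: "z \<in> V2" using zd n a(5) yl i_def by (auto simp: V2_def)
  have "lt x z" using zV a zd i_def by (auto simp: lt_iff)
  moreover have "\<not> lt y z"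
  proof
    assume "lt y z"
    hence "y div 4 < z div 4 \<or> z = y + 2" by (auto simp: lt_iff)
    moreover have "z = y + 2 \<Longrightarrow> y div 4 = z div 4" using ar1[of y] V1_md a by auto
    ultimately have "y div 4 \<le> Suc i" using zd by auto
    hence "y div 4 = Suc i" using a(5) i_def by simp
    thus False using c1 n by simp
  qed
  moreover have "\<not> lt z y" using zV V12 by (auto simp: lt_iff)
  ultimately have "z \<in> nbhd V1 V2 E x" "z \<notin> nbhd V1 V2 E y" using zV by (auto simp: nbhd_def)
  thus ?thesis by blast
qed

lemma nb_V2: "x \<in> V2 \<Longrightarrow> y \<in> V2 \<Longrightarrow> w ! (x div 4) \<noteq> T12 \<Longrightarrow> w ! (y div 4) \<noteq> T12 \<Longrightarrow>
    x div 4 < y div 4 \<Longrightarrow> nbhd V1 V2 E x \<noteq> nbhd V1 V2 E y"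
proof -
  assume a: "x \<in> V2" "y \<in> V2" "w ! (x div 4) \<noteq> T12" "w ! (y div 4) \<noteq> T12" "x div 4 < y div 4"
  define j where "j = y div 4 - 1"
  have jj: "Suc j = y div 4" using a(5) j_def by simp
  have c2: "w ! (x div 4) = C2" "w ! Suc j = C2" using V2_nonT a jj by auto
  have yl: "y div 4 < length w" using a V_len by auto
  have n: "w ! j \<noteq> C2"
  proof
    assume "w ! j = C2"
    hence "w ! j = T12" using smir_adj[OF sm, of j] c2 yl jj by simp
    thus False using c2 \<open>w ! j = C2\<close> by simp
  qed
  define z where "z = 4 * j"
  have zd: "z div 4 = j" "z mod 4 = 0" by (simp_all add: z_def)
  have zV: "z \<in> V1" using zd n yl jj by (auto simp: V1_def)
  have "lt z y" using zV a zd jj by (auto simp: lt_iff)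
  moreover have "\<not> lt z x"
  proof
    assume "lt z x"
    hence "z div 4 < x div 4 \<or> x = z + 2" by (auto simp: lt_iff)
    moreover have "x = z + 2 \<Longrightarrow> x div 4 = z div 4" using ar1[of z] V1_md zV by auto
    ultimately have "j \<le> x div 4" using zd by auto
    moreover have "x div 4 \<le> j" using a(5) jj by simp
    ultimately have "x div 4 = j" by simp
    thus False using c2 n by simp
  qed
  moreover have "\<not> lt x z" using a V12 by (auto simp: lt_iff)
  ultimately have "z \<in> nbhd V1 V2 E y" "z \<notin> nbhd V1 V2 E x" using zV by (auto simp: nbhd_def)
  thus ?thesis by blast
qed


lemma V_nonT_eq: "x \<in> V1 \<union> V2 \<Longrightarrow> y \<in> V1 \<union> V2 \<Longrightarrow> (x \<in> V1 \<longleftrightarrow> y \<in> V1) \<Longrightarrow>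
    w ! (x div 4) \<noteq> T12 \<Longrightarrow> x div 4 = y div 4 \<Longrightarrow> x = y"
proof -
  assume a: "x \<in> V1 \<union> V2" "y \<in> V1 \<union> V2" "(x \<in> V1 \<longleftrightarrow> y \<in> V1)" "w ! (x div 4) \<noteq> T12" "x div 4 = y div 4"
  show "x = y"
  proof (cases "x \<in> V1")
    case True
    hence "x mod 4 = 0" "y mod 4 = 0" using V1_nonT a by auto
    thus ?thesis using a(5) by presburger
  next
    case False
    hence "x \<in> V2" "y \<in> V2" using a by auto
    hence "x mod 4 = 2" "y mod 4 = 2" using V2_nonT a by auto
    thus ?thesis using a(5) by presburger
  qed
qed

lemma clone_like_single:
  assumes "clone_like V1 V2 E X" "x \<in> X" "y \<in> X"
  shows "x = y"
proof -
  have X: "X \<subseteq> V1 \<union> V2 - tangle_vertices V1 V2 E" "X \<subseteq> V1 \<or> X \<subseteq> V2"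
    "\<forall>a\<in>X. \<forall>b\<in>X. nbhd V1 V2 E a = nbhd V1 V2 E b"
    using assms(1) unfolding clone_like_def by blast+
  have xy: "x \<in> V1 \<union> V2" "y \<in> V1 \<union> V2" using X(1) assms by auto
  have nT: "w ! (x div 4) \<noteq> T12" "w ! (y div 4) \<noteq> T12" using X(1) assms TV_iff xy by auto
  have nb: "nbhd V1 V2 E x = nbhd V1 V2 E y" using X(3) assms by blast
  have same: "x \<in> V1 \<longleftrightarrow> y \<in> V1" using X(2) assms V12 by auto
  have "\<not> x div 4 < y div 4"
  proof
    assume lt: "x div 4 < y div 4"
    show False
    proof (cases "x \<in> V1")
      case True thus False using nb_V1[OF True _ nT lt] same nb by auto
    next
      case False
      hence "x \<in> V2" "y \<in> V2" using xy same by auto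
      thus False using nb_V2[OF _ _ nT lt] nb by auto
    qed
  qed
  moreover have "\<not> y div 4 < x div 4"
  proof
    assume lt: "y div 4 < x div 4"
    show False
    proof (cases "x \<in> V1")
      case True thus False using nb_V1[OF _ True nT(2,1) lt] same nb by auto
    next
      case False
      hence "x \<in> V2" "y \<in> V2" using xy same by auto
      thus False using nb_V2[OF _ _ nT(2,1) lt] nb by auto
    qed
  qed
  ultimately show "x = y" using V_nonT_eq[OF xy same nT(1)] by simp
qed

lemma clone_like_sing: "v \<in> V1 \<union> V2 \<Longrightarrow> w ! (v div 4) \<noteq> T12 \<Longrightarrow> clone_like V1 V2 E {v}"
  using TV_iff unfolding clone_like_def by auto

lemma clone_set_iff: "clone_set V1 V2 E X \<longleftrightarrow> (\<exists>v. v \<in> V1 \<union> V2 \<and> w ! (v div 4) \<noteq> T12 \<and> X = {v})"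
proof
  assume c: "clone_set V1 V2 E X"
  hence cl: "clone_like V1 V2 E X" "X \<noteq> {}" by (auto simp: clone_set_def)
  then obtain v where v: "v \<in> X" by blast
  have "X = {v}" using clone_like_single[OF cl(1) v] v by blast
  moreover have "v \<in> V1 \<union> V2 - tangle_vertices V1 V2 E" using cl(1) v unfolding clone_like_def by blast
  ultimately show "\<exists>v. v \<in> V1 \<union> V2 \<and> w ! (v div 4) \<noteq> T12 \<and> X = {v}" using TV_iff by auto
next
  assume "\<exists>v. v \<in> V1 \<union> V2 \<and> w ! (v div 4) \<noteq> T12 \<and> X = {v}"
  then obtain v where v: "v \<in> V1 \<union> V2" "w ! (v div 4) \<noteq> T12" "X = {v}" by blast
  have "\<forall>Y. X \<subseteq> Y \<and> clone_like V1 V2 E Y \<longrightarrow> Y = X"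
    using clone_like_single v(3) by blast
  thus "clone_set V1 V2 E X" using clone_like_sing[OF v(1,2)] v(3) by (simp add: clone_set_def)
qed

lemma GP_parts: "i < length w \<Longrightarrow> GP i \<in> parts V1 V2 E"
proof -
  assume i: "i < length w"
  show ?thesis
  proof (cases "w ! i")
    case C1
    have "4*i \<in> V1" using i C1 by (simp add: V1_def)
    hence "clone_set V1 V2 E {4*i}" using C1 by (auto simp: clone_set_iff)
    thus ?thesis using C1 by (auto simp: GP_def parts_def)
  next
    case C2
    have "4*i+2 \<in> V2" using i C2 by (simp add: V2_def)
    hence "clone_set V1 V2 E {4*i+2}" using C2 by (auto simp: clone_set_iff)
    thus ?thesis using C2 by (auto simp: GP_def parts_def)
  next
    case T12
    hence "(TT i, BB i) \<in> tangles V1 V2 E" using i by (auto simp: tangles_eq)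
    thus ?thesis using T12 by (force simp: GP_def parts_def TT_def BB_def)
  qed
qed

lemma parts_GP: "P \<in> parts V1 V2 E \<Longrightarrow> \<exists>i < length w. P = GP i"
proof -
  assume "P \<in> parts V1 V2 E"
  then consider (c) X where "P = Clone X" "clone_set V1 V2 E X"
    | (t) A B where "P = Tangle A B" "(A, B) \<in> tangles V1 V2 E"
    by (auto simp: parts_def)
  then show ?thesis
  proof cases
    case c
    then obtain v where v: "v \<in> V1 \<union> V2" "w ! (v div 4) \<noteq> T12" "X = {v}" by (auto simp: clone_set_iff)
    define i where "i = v div 4"
    have il: "i < length w" using v V_len i_def by auto
    show ?thesis
    proof (cases "v \<in> V1")
      case True
      hence "w ! i = C1" "v mod 4 = 0" using V1_nonT v i_def by auto
      hence "v = 4 * i" "GP i = Clone {4*i}" using i_def by (auto simp: GP_def)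
      thus ?thesis using c v il by auto
    next
      case False
      hence "v \<in> V2" using v by auto
      hence "w ! i = C2" "v mod 4 = 2" using V2_nonT v i_def by auto
      hence "v = 4 * i + 2" "GP i = Clone {4*i+2}" using i_def by (auto simp: GP_def) presburger
      thus ?thesis using c v il by auto
    qed
  next
    case t
    then obtain i where "i < length w" "w ! i = T12" "A = TT i" "B = BB i" by (auto simp: tangles_eq)
    thus ?thesis using t by (auto simp: GP_def TT_def BB_def)
  qed
qed

lemma GP_verts: "i < length w \<Longrightarrow> part_verts (GP i) \<noteq> {} \<and> (\<forall>v\<in>part_verts (GP i). v div 4 = i)"
  by (cases "w ! i") (auto simp: GP_def)

lemma listing: "compatible_listing V1 V2 E Xs"
  unfolding compatible_listing_def
proof (intro conjI allI impI ballI)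
  have "inj_on GP {0..<length w}"
  proof (rule inj_onI)
    fix i j assume ij: "i \<in> {0..<length w}" "j \<in> {0..<length w}" "GP i = GP j"
    obtain v where "v \<in> part_verts (GP i)" using GP_verts[of i] ij by auto
    thus "i = j" using GP_verts[of i] GP_verts[of j] ij by auto
  qed
  thus "distinct Xs" by (simp add: Xs_def distinct_map)
  show "set Xs = parts V1 V2 E"
  proof
    show "set Xs \<subseteq> parts V1 V2 E" using GP_parts by (auto simp: Xs_def)
    show "parts V1 V2 E \<subseteq> set Xs"
    proof
      fix P assume "P \<in> parts V1 V2 E"
      then obtain i where "i < length w" "P = GP i" using parts_GP by blast
      thus "P \<in> set Xs" by (auto simp: Xs_def)
    qed
  qed
  fix i j a b assume ij: "i < length Xs" "j < length Xs" "i \<noteq> j"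
    and a: "a \<in> part_verts (Xs ! i) \<inter> V1" and b: "b \<in> part_verts (Xs ! j) \<inter> V2"
  have il: "i < length w" "j < length w" using ij by (auto simp: Xs_def)
  have ad: "a div 4 = i" "b div 4 = j" using a b GP_verts il by (auto simp: Xs_def)
  have "b = a + 2 \<Longrightarrow> b div 4 = a div 4" using ar1[of a] V1_md a by auto
  thus "lt a b \<longleftrightarrow> i < j" using a b ad ij(3) by (auto simp: lt_iff)
qed

lemma word: "map (part_letter V1) Xs = w"
proof (rule nth_equalityI)
  show "length (map (part_letter V1) Xs) = length w" by (simp add: Xs_def)
  fix i assume "i < length (map (part_letter V1) Xs)"
  hence i: "i < length w" by (simp add: Xs_def)
  have "part_letter V1 (GP i) = w ! i"
  proof (cases "w ! i")
    case C1
    have "4*i \<in> V1" using i C1 by (simp add: V1_def)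
    thus ?thesis using C1 by (simp add: GP_def)
  next
    case C2
    have "4*i+2 \<notin> V1" using V1_md[of "4*i+2"] by auto
    thus ?thesis using C2 by (simp add: GP_def)
  next
    case T12 thus ?thesis by (simp add: GP_def)
  qed
  thus "map (part_letter V1) Xs ! i = w ! i" using i by (simp add: Xs_def)
qed

lemma fin: "finite V1" "finite V2"
proof -
  have "V1 \<subseteq> {..<4 * length w}" "V2 \<subseteq> {..<4 * length w}"
    by (auto simp: V1_def V2_def)
  thus "finite V1" "finite V2" by (auto intro: finite_subset)
qed

lemma in_skel: "w \<in> skeleton_words"
proof -
  have "V1 \<inter> V2 = {}" using V12 by blast
  moreover have "E \<subseteq> V1 \<times> V2" by (auto simp: E_def)
  ultimately have "finite V1 \<and> finite V2 \<and> V1 \<inter> V2 = {} \<and> E \<subseteq> V1 \<times> V2 \<and> compatible_listing V1 V2 E Xs \<and> w = map (part_letter V1) Xs"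
    using fin listing word by simp
  thus ?thesis unfolding skeleton_words_def by blast
qed

end

lemma smir_skel: "smir w \<Longrightarrow> w \<in> skeleton_words"
  using gr.in_skel gr.intro by blast


lemma skel_eq: "skeleton_words = {w. smir w}"
  using skel_smir smir_skel by blast

theorem lemma4p1:
  "\<exists>\<epsilon> > 0. \<forall>c1 c2 t :: real. \<bar>c1\<bar> < \<epsilon> \<and> \<bar>c2\<bar> < \<epsilon> \<and> \<bar>t\<bar> < \<epsilon> \<longrightarrow>
     ((\<lambda>w. c1 ^ count_list w C1 * c2 ^ count_list w C2 * t ^ count_list w T12)
        has_sum (1 / (1 - c1 / (1 + c1) - c2 / (1 + c2) - t))) skeleton_words"
proof (intro exI[of _ "1/4 :: real"] conjI allI impI)
  show "(0::real) < 1/4" by simp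
  fix c1 c2 t :: real
  assume "\<bar>c1\<bar> < 1/4 \<and> \<bar>c2\<bar> < 1/4 \<and> \<bar>t\<bar> < 1/4"
  hence "(wt c1 c2 t has_sum (1 / (1 - c1 / (1 + c1) - c2 / (1 + c2) - t))) {w. smir w}"
    by (intro genfun) auto
  moreover have "wt c1 c2 t = (\<lambda>w. c1 ^ count_list w C1 * c2 ^ count_list w C2 * t ^ count_list w T12)"
    by (rule ext) (simp add: wt_def)
  ultimately show "((\<lambda>w. c1 ^ count_list w C1 * c2 ^ count_list w C2 * t ^ count_list w T12)
        has_sum (1 / (1 - c1 / (1 + c1) - c2 / (1 + c2) - t))) skeleton_words"
    by (simp add: skel_eq)
qed

end
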